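(* Let $\langle A,C,d,O,v,(\prec_a)_{a\in A}\rangle$ be an infinite sequential game, let $a\in A$, and assume: (1) $\prec_a$ is a strict weak order; (2) for every play $p\in C^\omega$ and increasing $\varphi:\mathbb{N}\to\mathbb{N}$, if $d(p_{<\varphi(n)})=a$ and $G_a(p_{<\varphi(n+1)})\subsetneq G_a(p_{<\varphi(n)})$ for all $n\in\mathbb{N}$, then $v(p)\in\bigcap_{n\in\mathbb{N}}G_a(p_{<\varphi(n)})$; (3) for every $\gamma\in C^*$ there exists a strategy $s$ of $a$ with $g_a(\gamma,s)=G_a(\gamma)$. Then there exists a strategy $s$ of $a$ such that $g_a(\gamma,s)=G_a(\gamma)$ for all $\gamma\in C^*$.
   Context: An infinite sequential game $\langle A,C,d,O,v,(\prec_a)_{a\in A}\rangle$ consists of a non-empty set of agents $A$, a non-empty set of choices $C$, $d:C^*\to A$ (the agent choosing after each finite history), a non-empty set of outcomes $O$, $v:C^\omega\to O$, and binary relations $\prec_a$ on $O$. A strategy of $a$ is a function $s:d^{-1}(\{a\})\to C$. For a partial function $t:\subseteq C^*\to C$, $P(t)$ is the set of plays $p(\sigma)$ (where $p_n=\sigma(p_{<n})$) over all total $\sigma:C^*\to C$ extending $t$. For $\gamma\in C^*$ and strategy $s$ of $a$, $s|_\gamma$ is the restriction of $s$ to histories in $d^{-1}(\{a\})$ extending $\gamma$; $g_a(\gamma,s):=\{o\in O\mid\exists p\in P(s|_\gamma)\cap\gamma C^\omega,\ \neg(o\prec_a v(p))\}$ and $G_a(\gamma):=\bigcap_s g_a(\gamma,s)$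 over all strategies $s$ of $a$. $p_{<n}$ is the length-$n$ prefix of $p$. A strict weak order is an irreflexive, transitive relation $\prec$ such that $\neg(x\prec y)\wedge\neg(y\prec z)$ implies $\neg(x\prec z)$. *)

theory Defs
  imports Main "HOL-Library.Sublist"
begin

text \<open>Agents, choices, outcomes are types (hence non-empty). Finite histories C^* are
lists (in chronological order), plays C^omega are functions nat => 'c.
A strategy of agent a is represented as a total function 'c list => 'c; only its values
on histories h with d h = a are ever used.\<close>

definition strict_weak_order :: "('o \<Rightarrow> 'o \<Rightarrow> bool) \<Rightarrow> bool" where
  "strict_weak_order r \<longleftrightarrow> (\<forall>x. \<not> r x x) \<and> (\<forall>x y z. r x y \<and> r y z \<longrightarrow> r x z)
     \<and> (\<forall>x y z. \<not> r x y \<and> \<not> r y z \<longrightarrow> \<not> r x z)"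

definition pre :: "(nat \<Rightarrow> 'c) \<Rightarrow> nat \<Rightarrow> 'c list" where
  "pre p n = map p [0..<n]"

fun hist :: "('c list \<Rightarrow> 'c) \<Rightarrow> nat \<Rightarrow> 'c list" where
  "hist \<sigma> 0 = []"
| "hist \<sigma> (Suc n) = hist \<sigma> n @ [\<sigma> (hist \<sigma> n)]"

definition play :: "('c list \<Rightarrow> 'c) \<Rightarrow> nat \<Rightarrow> 'c" where
  "play \<sigma> n = \<sigma> (hist \<sigma> n)"

definition plays :: "('c list \<Rightarrow> 'c option) \<Rightarrow> (nat \<Rightarrow> 'c) set" where
  "plays t = {play \<sigma> | \<sigma>. \<forall>h c. t h = Some c \<longrightarrow> \<sigma> h = c}"

definition restr :: "('c list \<Rightarrow> 'a) \<Rightarrow> 'a \<Rightarrow> ('c list \<Rightarrow> 'c) \<Rightarrow> 'c list \<Rightarrow> 'c list \<Rightarrow> 'c option" where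
  "restr d a s \<gamma> h = (if d h = a \<and> prefix \<gamma> h then Some (s h) else None)"

definition g_set :: "('c list \<Rightarrow> 'a) \<Rightarrow> ((nat \<Rightarrow> 'c) \<Rightarrow> 'o) \<Rightarrow> ('a \<Rightarrow> 'o \<Rightarrow> 'o \<Rightarrow> bool)
    \<Rightarrow> 'a \<Rightarrow> 'c list \<Rightarrow> ('c list \<Rightarrow> 'c) \<Rightarrow> 'o set" where
  "g_set d v prec a \<gamma> s = {x. \<exists>p \<in> plays (restr d a s \<gamma>). pre p (length \<gamma>) = \<gamma> \<and> \<not> prec a x (v p)}"

definition G_set :: "('c list \<Rightarrow> 'a) \<Rightarrow> ((nat \<Rightarrow> 'c) \<Rightarrow> 'o) \<Rightarrow> ('a \<Rightarrow> 'o \<Rightarrow> 'o \<Rightarrow> bool)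
    \<Rightarrow> 'a \<Rightarrow> 'c list \<Rightarrow> 'o set" where
  "G_set d v prec a \<gamma> = (\<Inter>s. g_set d v prec a \<gamma> s)"

end

theory Submission
  imports Defs
begin

lemma pre_Suc: "pre p (Suc n) = pre p n @ [p n]" by (simp add: pre_def)
lemma length_pre[simp]: "length (pre p n) = n" by (simp add: pre_def)
lemma pre_0[simp]: "pre p 0 = []" by (simp add: pre_def)
lemma take_pre: "take m (pre p n) = pre p (min m n)" by (simp add: pre_def take_map) (metis add_0 take_upt le_add_diff_inverse2 nat_le_linear min_def take_all length_upt diff_zero upt_conv_Nil)
lemma nth_pre: "i < n \<Longrightarrow> pre p n ! i = p i" by (simp add: pre_def)

lemma hist_play: "hist \<sigma> n = pre (play \<sigma>) n"
  by (induction n) (auto simp: pre_Suc play_def)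

lemma prefix_pre: "prefix k (pre p n) \<longleftrightarrow> length k \<le> n \<and> pre p (length k) = k"
proof
  assume "prefix k (pre p n)"
  then obtain zs where z: "pre p n = k @ zs" by (auto simp: prefix_def)
  hence "length k \<le> n" by (metis le_add1 length_append length_pre)
  moreover have "take (length k) (pre p n) = k" using z by simp
  ultimately show "length k \<le> n \<and> pre p (length k) = k" by (simp add: take_pre min_def)
next
  assume h: "length k \<le> n \<and> pre p (length k) = k"
  hence "take (length k) (pre p n) = k" by (simp add: take_pre min_def)
  thus "prefix k (pre p n)" by (metis take_is_prefix)
qed

definition follows :: "('c list \<Rightarrow> 'a) \<Rightarrow> 'a \<Rightarrow> ('c list \<Rightarrow> 'c) \<Rightarrow> 'c list \<Rightarrow> (nat \<Rightarrow> 'c) \<Rightarrow> bool" where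
  "follows d a t k p \<longleftrightarrow> (\<forall>n. d (pre p n) = a \<and> prefix k (pre p n) \<longrightarrow> p n = t (pre p n))"

lemma plays_char: "p \<in> plays (restr d a t k) \<longleftrightarrow> follows d a t k p"
proof
  assume "p \<in> plays (restr d a t k)"
  then obtain \<sigma> where p: "p = play \<sigma>" and c: "\<forall>h c. restr d a t k h = Some c \<longrightarrow> \<sigma> h = c"
    by (auto simp: plays_def)
  show "follows d a t k p" unfolding follows_def
  proof (intro allI impI)
    fix n assume "d (pre p n) = a \<and> prefix k (pre p n)"
    hence "\<sigma> (pre p n) = t (pre p n)" using c by (auto simp: restr_def)
    thus "p n = t (pre p n)" using p by (simp add: play_def hist_play)
  qed
next
  assume f: "follows d a t k p"
  define \<sigma> where "\<sigma> h = (if h = pre p (length h) then p (length h) else t h)" for h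
  have hs: "hist \<sigma> n = pre p n" for n
    by (induction n) (auto simp: pre_Suc \<sigma>_def)
  have "play \<sigma> = p" by (rule ext) (simp add: play_def hs \<sigma>_def)
  moreover have "\<forall>h c. restr d a t k h = Some c \<longrightarrow> \<sigma> h = c"
  proof (intro allI impI)
    fix h c assume "restr d a t k h = Some c"
    hence r: "d h = a" "prefix k h" "c = t h" by (auto simp: restr_def split: if_splits)
    show "\<sigma> h = c"
    proof (cases "h = pre p (length h)")
      case True
      then show ?thesis using f r unfolding follows_def \<sigma>_def by (metis (no_types))
    qed (simp add: \<sigma>_def r)
  qed
  ultimately show "p \<in> plays (restr d a t k)" unfolding plays_def by blast
qed

lemma g_char: "x \<in> g_set d v prec a \<gamma> t \<longleftrightarrow>
   (\<exists>p. follows d a t \<gamma> p \<and> pre p (length \<gamma>) = \<gamma> \<and> \<not> prec a x (v p))"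
  by (auto simp: g_set_def plays_char)

definition cons :: "('c list \<Rightarrow> 'a) \<Rightarrow> 'a \<Rightarrow> ('c list \<Rightarrow> 'c) \<Rightarrow> 'c list \<Rightarrow> 'c list \<Rightarrow> bool" where
  "cons d a t k h \<longleftrightarrow> (\<forall>m. length k \<le> m \<and> m < length h \<and> d (take m h) = a \<longrightarrow> h!m = t (take m h))"

lemma cons_snoc: "cons d a t k h \<Longrightarrow> (d h = a \<longrightarrow> c = t h) \<Longrightarrow> cons d a t k (h @ [c])"
  unfolding cons_def
  by (metis less_Suc_eq length_append_singleton nth_append nth_append_length take_append
      butlast_snoc take_all_iff take_butlast order_refl le_refl)

lemma g_mono_cons: assumes "prefix k h" "cons d a t k h"
  shows "g_set d v prec a h t \<subseteq> g_set d v prec a k t"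
proof
  fix x assume "x \<in> g_set d v prec a h t"
  then obtain p where f: "follows d a t h p" and ph: "pre p (length h) = h" and nx: "\<not> prec a x (v p)"
    by (auto simp: g_char)
  have pk: "pre p (length k) = k" using assms(1) ph prefix_pre by metis
  have "follows d a t k p" unfolding follows_def
  proof (intro allI impI)
    fix n assume n: "d (pre p n) = a \<and> prefix k (pre p n)"
    show "p n = t (pre p n)"
    proof (cases "length h \<le> n")
      case True
      then have "prefix h (pre p n)" using ph prefix_pre by metis
      then show ?thesis using f n by (auto simp: follows_def)
    next
      case False
      have "length k \<le> n" using n prefix_pre by metis
      moreover have "take n h = pre p n" using False ph by (metis take_pre min_def nat_le_linear)
      moreover have "h ! n = p n" using False ph by (metis not_le nth_pre)
      ultimately show ?thesis using assms(2) False n unfolding cons_def by (metis not_le)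
    qed
  qed
  thus "x \<in> g_set d v prec a k t" using pk nx by (auto simp: g_char)
qed

fun ancl :: "('c list \<Rightarrow> 'a) \<Rightarrow> 'a \<Rightarrow> ('c list \<Rightarrow> 'c list \<Rightarrow> 'c) \<Rightarrow> ('c list \<Rightarrow> 'o set) \<Rightarrow> 'c list \<Rightarrow> 'c list" where
  "ancl d a S G [] = []"
| "ancl d a S G (c # r) = (let k = ancl d a S G r; h' = rev (c # r) in
     if cons d a (S k) k h' \<and> G h' = G k then k else h')"

definition anc where "anc d a S G h = ancl d a S G (rev h)"

lemma anc_Nil: "anc d a S G [] = []" by (simp add: anc_def)
lemma anc_snoc: "anc d a S G (h @ [c]) = (let k = anc d a S G h in
     if cons d a (S k) k (h @ [c]) \<and> G (h @ [c]) = G k then k else h @ [c])"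
  by (simp add: anc_def Let_def)

lemma anc_props: "prefix (anc d a S G h) h \<and> cons d a (S (anc d a S G h)) (anc d a S G h) h
   \<and> G (anc d a S G h) = G h"
proof (induction h rule: rev_induct)
  case Nil
  then show ?case by (simp add: anc_Nil cons_def)
next
  case (snoc c h)
  then show ?case unfolding anc_snoc Let_def
    by (auto simp: cons_def intro: prefix_order.trans)
qed

lemma upclosed:
  assumes sw: "strict_weak_order (prec a)" and y: "y \<in> G_set d v prec a h" and n: "\<not> prec a x y"
  shows "x \<in> G_set d v prec a h"
  unfolding G_set_def
proof
  fix t
  from y have "y \<in> g_set d v prec a h t" by (auto simp: G_set_def)
  then obtain p where "follows d a t h p" "pre p (length h) = h" "\<not> prec a y (v p)" by (auto simp: g_char)
  moreover have "\<not> prec a x (v p)" using sw n \<open>\<not> prec a y (v p)\<close> unfolding strict_weak_order_def by blast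
  ultimately show "x \<in> g_set d v prec a h t" by (auto simp: g_char)
qed


theorem lemma21:
  fixes d :: "'c list \<Rightarrow> 'a" and v :: "(nat \<Rightarrow> 'c) \<Rightarrow> 'o"
    and prec :: "'a \<Rightarrow> 'o \<Rightarrow> 'o \<Rightarrow> bool" and a :: 'a
  assumes "strict_weak_order (prec a)"
    and "\<And>p \<phi>. strict_mono (\<phi> :: nat \<Rightarrow> nat) \<Longrightarrow>
          (\<forall>n. d (pre p (\<phi> n)) = a \<and>
               G_set d v prec a (pre p (\<phi> (Suc n))) \<subset> G_set d v prec a (pre p (\<phi> n))) \<Longrightarrow>
          v p \<in> (\<Inter>n. G_set d v prec a (pre p (\<phi> n)))"
    and "\<And>\<gamma>. \<exists>s. g_set d v prec a \<gamma> s = G_set d v prec a \<gamma>"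
  shows "\<exists>s. \<forall>\<gamma>. g_set d v prec a \<gamma> s = G_set d v prec a \<gamma>"
proof -
  define G where "G = G_set d v prec a"
  define gg where "gg = g_set d v prec a"
  obtain S where S: "\<And>\<gamma>. gg \<gamma> (S \<gamma>) = G \<gamma>"
    using assms(3) unfolding gg_def G_def by metis
  have Gsub: "G h \<subseteq> gg h t" for h t unfolding G_def gg_def G_set_def by blast
  define A where "A = anc d a S G"
  have AP: "prefix (A h) h" "cons d a (S (A h)) (A h) h" "G (A h) = G h" for h
    using anc_props[of d a S G h] unfolding A_def by auto
  define s where "s h = S (A h) h" for h
  have main: "x \<in> G \<gamma>" if xg: "x \<in> gg \<gamma> s" for x \<gamma>
  proof -
    define n0 where "n0 = length \<gamma>"
    obtain p where fp: "follows d a s \<gamma> p" and pg: "pre p n0 = \<gamma>" and nx: "\<not> prec a x (v p)"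
      using xg unfolding gg_def n0_def by (auto simp: g_char)
    have F: "p m = s (pre p m)" if "m \<ge> n0" "d (pre p m) = a" for m
      using fp that pg prefix_pre[of \<gamma> p m] unfolding follows_def n0_def by auto
    have stepC: "cons d a (S (A (pre p m))) (A (pre p m)) (pre p (Suc m))" if "m \<ge> n0" for m
      unfolding pre_Suc
      by (rule cons_snoc[OF AP(2)]) (use F[OF that] s_def in auto)
    have stepG: "G (pre p (Suc m)) \<subseteq> G (pre p m)" if "m \<ge> n0" for m
    proof -
      let ?k = "A (pre p m)"
      have pk: "prefix ?k (pre p (Suc m))" using AP(1)[of "pre p m"] unfolding pre_Suc
        by (metis prefix_order.trans prefixI)
      have "G (pre p (Suc m)) \<subseteq> gg (pre p (Suc m)) (S ?k)" by (rule Gsub)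
      also have "\<dots> \<subseteq> gg ?k (S ?k)" unfolding gg_def by (rule g_mono_cons[OF pk stepC[OF that]])
      also have "\<dots> = G (pre p m)" using S AP(3) by simp
      finally show ?thesis .
    qed
    have mono: "G (pre p m) \<subseteq> G (pre p m')" if "m' \<le> m" "n0 \<le> m'" for m m'
      using that(1)
    proof (induction m rule: dec_induct)
      case (step m)
      then show ?case using stepG[of m] that(2) by auto
    qed simp
    have suff: "x \<in> G \<gamma>" if "x \<in> G (pre p M)" "M \<ge> n0" for M
      using mono[OF that(2) order_refl] that(1) pg by auto
    show ?thesis
    proof (cases "\<exists>M\<ge>n0. \<forall>m\<ge>M. G (pre p m) = G (pre p M)")
      case True
      then obtain M where M: "M \<ge> n0" "\<And>m. m \<ge> M \<Longrightarrow> G (pre p m) = G (pre p M)" by blast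
      define k where "k = A (pre p M)"
      have Ak: "A (pre p m) = k" if "m \<ge> M" for m
        using that
      proof (induction m rule: dec_induct)
        case base then show ?case by (simp add: k_def)
      next
        case (step m)
        have "cons d a (S k) k (pre p m @ [p m])" using step.IH stepC[of m] step.hyps M(1) pre_Suc by (metis order.trans)
        moreover have "G (pre p m @ [p m]) = G k"
          using M(2)[of "Suc m"] step.hyps AP(3)[of "pre p M"] unfolding k_def pre_Suc by simp
        ultimately show ?case unfolding pre_Suc A_def anc_snoc Let_def using step.IH A_def by simp
      qed
      have pkM: "prefix k (pre p M)" using AP(1) k_def by simp
      have "follows d a (S k) k p" unfolding follows_def
      proof (intro allI impI)
        fix n assume n: "d (pre p n) = a \<and> prefix k (pre p n)"
        show "p n = S k (pre p n)"
        proof (cases "M \<le> n")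
          case True
          then show ?thesis using F[of n] M(1) n Ak s_def by auto
        next
          case False
          have "length k \<le> n" using n prefix_pre by metis
          moreover have "take n (pre p M) = pre p n" using False by (simp add: take_pre)
          moreover have "pre p M ! n = p n" using False by (simp add: nth_pre)
          ultimately show ?thesis using AP(2)[of "pre p M"] False n unfolding cons_def k_def
            by (metis length_pre not_le)
        qed
      qed
      moreover have "pre p (length k) = k" using pkM prefix_pre by metis
      ultimately have "x \<in> gg k (S k)" using nx unfolding gg_def by (auto simp: g_char)
      hence "x \<in> G (pre p M)" using S AP(3) k_def by simp
      then show ?thesis using suff M(1) by blast
    next
      case False
      hence nc: "\<exists>m\<ge>M. G (pre p m) \<subset> G (pre p M)" if "M \<ge> n0" for M
        using that mono by (meson order.trans psubsetI)
      show ?thesis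
      proof (cases "\<exists>N\<ge>n0. \<forall>n\<ge>N. d (pre p n) \<noteq> a")
        case True
        then obtain N where N: "N \<ge> n0" "\<And>n. n \<ge> N \<Longrightarrow> d (pre p n) \<noteq> a" by blast
        let ?h = "pre p N"
        have "follows d a (S ?h) ?h p" unfolding follows_def
        proof (intro allI impI)
          fix n assume "d (pre p n) = a \<and> prefix ?h (pre p n)"
          then have "n \<ge> N" "d (pre p n) = a" using prefix_pre[of ?h p n] by auto
          then show "p n = S ?h (pre p n)" using N(2) by blast
        qed
        hence "x \<in> gg ?h (S ?h)" using nx unfolding gg_def by (auto simp: g_char)
        then show ?thesis using S suff N(1) by simp
      next
        case False
        hence an: "\<exists>n\<ge>N. d (pre p n) = a" if "N \<ge> n0" for N using that by auto
        have ex: "\<exists>n. M < n \<and> d (pre p n) = a \<and> G (pre p n) \<subset> G (pre p M)" if hM: "M \<ge> n0" for M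
        proof -
          obtain m where m: "m \<ge> M" "G (pre p m) \<subset> G (pre p M)" using nc[OF hM] by blast
          obtain n where n: "n \<ge> m" "d (pre p n) = a" using an[of m] m hM by auto
          have "G (pre p n) \<subseteq> G (pre p m)" using mono n m hM by auto
          moreover have "m \<noteq> M" using m by auto
          ultimately show ?thesis using n m by (intro exI[of _ n]) auto
        qed
        define f where "f M = (SOME n. M < n \<and> d (pre p n) = a \<and> G (pre p n) \<subset> G (pre p M))" for M
        have fP: "M < f M \<and> d (pre p (f M)) = a \<and> G (pre p (f M)) \<subset> G (pre p M)" if "M \<ge> n0" for M
          unfolding f_def by (rule someI_ex[OF ex[OF that]])
        obtain n1 where n1: "n1 \<ge> n0" "d (pre p n1) = a" using an by blast
        define \<phi> where "\<phi> i = (f ^^ i) n1" for i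
        have \<phi>S: "\<phi> (Suc i) = f (\<phi> i)" for i by (simp add: \<phi>_def)
        have \<phi>n0: "\<phi> i \<ge> n0" for i
        proof (induction i)
          case 0 then show ?case using n1 by (simp add: \<phi>_def)
        next
          case (Suc i) then show ?case using fP[of "\<phi> i"] \<phi>S by auto
        qed
        have \<phi>a: "d (pre p (\<phi> i)) = a" for i
        proof (cases i)
          case 0 then show ?thesis using n1 by (simp add: \<phi>_def)
        next
          case (Suc j) then show ?thesis using fP[OF \<phi>n0[of j]] \<phi>S by auto
        qed
        have sm: "strict_mono \<phi>" unfolding strict_mono_Suc_iff using fP \<phi>n0 \<phi>S by auto
        have "v p \<in> (\<Inter>n. G_set d v prec a (pre p (\<phi> n)))"
          using assms(2)[OF sm] \<phi>a fP \<phi>n0 \<phi>S unfolding G_def by auto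
        hence "v p \<in> G (pre p (\<phi> 0))" unfolding G_def by auto
        hence "x \<in> G (pre p (\<phi> 0))" using upclosed[of prec a "v p" d v "pre p (\<phi> 0)" x] assms(1) nx unfolding G_def by blast
        then show ?thesis using suff \<phi>n0 by blast
      qed
    qed
  qed
  have "gg \<gamma> s = G \<gamma>" for \<gamma> using main Gsub by blast
  thus ?thesis unfolding gg_def G_def by blast
qed

end
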